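(* Let $\Omega\subset\mathbb{R}^N$ be a bounded Lipschitz domain with outward unit normal $n$, let $A:\bar\Omega\to\mathcal{M}_{N\times N}(\mathbb{R})$ be a smooth uniformly elliptic matrix field, let $r\in C^{0,1}(\bar\Omega)$ with $r>0$, let $k\in C^{0,1}(\bar\Omega)$ with $k>0$, and let $p\ge1$. Let $\lambda_1$ be the first eigenvalue of $\nabla\cdot(A\nabla\,\cdot)+r$ with Neumann boundary condition and $\phi_1>0$ an associated eigenfunction ($\nabla\cdot(A\nabla\phi_1)+r\phi_1=-\lambda_1\phi_1$ in $\Omega$, $\partial_n\phi_1=0$ on $\partial\Omega$). If $\lambda_1<0$, then there exists $\mu>0$ such that $\mu\phi_1$ is a positive stationary solution of $$\frac{\partial u}{\partial t}=u\Big(r(x)-\int_\Omega k(y)|u(t,y)|^p\,dy\Big)+\nabla\cdot(A(x)\nabla u)\ \text{ in }(0,\infty)\times\Omega,\qquad\frac{\partial u}{\partial n}=0\ \text{ on }(0,\infty)\times\partial\Omega.$$ *)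

theory Defs
  imports "HOL-Analysis.Analysis"
begin

text \<open>Space R^N is modelled as real^'n with 'n a finite index type (N = CARD('n)).\<close>

definition grad :: "(real^'n \<Rightarrow> real) \<Rightarrow> real^'n \<Rightarrow> real^'n" where
  "grad f x = (\<chi> i. frechet_derivative f (at x) (axis i 1))"

definition divergence :: "(real^'n \<Rightarrow> real^'n) \<Rightarrow> real^'n \<Rightarrow> real" where
  "divergence F x = (\<Sum>i\<in>UNIV. frechet_derivative F (at x) (axis i 1) $ i)"

fun Ck_on :: "nat \<Rightarrow> (real^'n) set \<Rightarrow> (real^'n \<Rightarrow> real) \<Rightarrow> bool" where
  "Ck_on 0 U f = continuous_on U f"
| "Ck_on (Suc k) U f = (continuous_on U f \<and> (\<forall>x\<in>U. f differentiable (at x)) \<and>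
      (\<forall>i. Ck_on k U (\<lambda>x. frechet_derivative f (at x) (axis i 1))))"

definition smooth_matrix_on :: "(real^'n) set \<Rightarrow> (real^'n \<Rightarrow> real^'n^'n) \<Rightarrow> bool" where
  "smooth_matrix_on S A \<longleftrightarrow> (\<exists>U. open U \<and> S \<subseteq> U \<and>
      (\<forall>i j k. Ck_on k U (\<lambda>x. A x $ i $ j)))"

definition uniformly_elliptic_on :: "(real^'n) set \<Rightarrow> (real^'n \<Rightarrow> real^'n^'n) \<Rightarrow> bool" where
  "uniformly_elliptic_on S A \<longleftrightarrow> (\<exists>\<theta>>0. \<forall>x\<in>S. \<forall>\<xi>. (A x *v \<xi>) \<bullet> \<xi> \<ge> \<theta> * (norm \<xi>)\<^sup>2)"

definition lipschitz_domain :: "(real^'n) set \<Rightarrow> bool" where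
  "lipschitz_domain \<Omega> \<longleftrightarrow> open \<Omega> \<and> connected \<Omega> \<and> \<Omega> \<noteq> {} \<and> bounded \<Omega> \<and>
     (\<forall>x\<in>frontier \<Omega>. \<exists>d::real^'n. \<exists>\<gamma>::real^'n \<Rightarrow> real. \<exists>C. \<exists>\<delta>>0.
        norm d = 1 \<and> C-lipschitz_on UNIV \<gamma> \<and>
        (\<forall>y\<in>ball x \<delta>. y \<in> \<Omega> \<longleftrightarrow> y \<bullet> d < \<gamma> (y - (y \<bullet> d) *\<^sub>R d)))"

text \<open>v is the outward unit normal to \<Omega> at the boundary point x (wherever it exists;
  for a Lipschitz domain this is almost every boundary point).\<close>
definition outward_normal :: "(real^'n) set \<Rightarrow> real^'n \<Rightarrow> real^'n \<Rightarrow> bool" where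
  "outward_normal \<Omega> x v \<longleftrightarrow> x \<in> frontier \<Omega> \<and> norm v = 1 \<and>
     (\<forall>\<epsilon>>0. \<exists>\<delta>>0. \<forall>y\<in>ball x \<delta>.
        ((y - x) \<bullet> v < - \<epsilon> * norm (y - x) \<longrightarrow> y \<in> \<Omega>) \<and>
        ((y - x) \<bullet> v > \<epsilon> * norm (y - x) \<longrightarrow> y \<notin> closure \<Omega>))"

text \<open>u is C^1 up to the boundary (gradient extends continuously to the closure) and
  satisfies the homogeneous Neumann condition du/dn = 0 at every boundary point
  where the outward unit normal exists.\<close>
definition neumann_bc :: "(real^'n) set \<Rightarrow> (real^'n \<Rightarrow> real) \<Rightarrow> bool" where
  "neumann_bc \<Omega> u \<longleftrightarrow> continuous_on (closure \<Omega>) u \<and> (\<forall>x\<in>\<Omega>. u differentiable (at x)) \<and>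
     (\<exists>g. continuous_on (closure \<Omega>) g \<and> (\<forall>x\<in>\<Omega>. g x = grad u x) \<and>
          (\<forall>x v. outward_normal \<Omega> x v \<longrightarrow> g x \<bullet> v = 0))"

definition neumann_eigenpair ::
  "(real^'n) set \<Rightarrow> (real^'n \<Rightarrow> real^'n^'n) \<Rightarrow> (real^'n \<Rightarrow> real) \<Rightarrow> real \<Rightarrow> (real^'n \<Rightarrow> real) \<Rightarrow> bool" where
  "neumann_eigenpair \<Omega> A r lam \<phi> \<longleftrightarrow> neumann_bc \<Omega> \<phi> \<and>
     (\<forall>x\<in>\<Omega>. (\<lambda>y. A y *v grad \<phi> y) differentiable (at x)) \<and>
     (\<forall>x\<in>\<Omega>. divergence (\<lambda>y. A y *v grad \<phi> y) x + r x * \<phi> x = - lam * \<phi> x) \<and>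
     (\<exists>x\<in>\<Omega>. \<phi> x \<noteq> 0)"

definition first_neumann_eigenvalue ::
  "(real^'n) set \<Rightarrow> (real^'n \<Rightarrow> real^'n^'n) \<Rightarrow> (real^'n \<Rightarrow> real) \<Rightarrow> real \<Rightarrow> bool" where
  "first_neumann_eigenvalue \<Omega> A r lam \<longleftrightarrow> (\<exists>\<phi>. neumann_eigenpair \<Omega> A r lam \<phi>) \<and>
     (\<forall>\<mu> \<phi>. neumann_eigenpair \<Omega> A r \<mu> \<phi> \<longrightarrow> lam \<le> \<mu>)"

definition nonlocal_solution ::
  "(real^'n) set \<Rightarrow> (real^'n \<Rightarrow> real^'n^'n) \<Rightarrow> (real^'n \<Rightarrow> real) \<Rightarrow> (real^'n \<Rightarrow> real) \<Rightarrow> real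
     \<Rightarrow> (real \<Rightarrow> real^'n \<Rightarrow> real) \<Rightarrow> bool" where
  "nonlocal_solution \<Omega> A r k p u \<longleftrightarrow> (\<forall>t>0.
     neumann_bc \<Omega> (u t) \<and>
     (\<forall>x\<in>\<Omega>. (\<lambda>y. A y *v grad (u t) y) differentiable (at x)) \<and>
     (\<lambda>y. k y * \<bar>u t y\<bar> powr p) integrable_on \<Omega> \<and>
     (\<forall>x\<in>\<Omega>. ((\<lambda>s. u s x) has_real_derivative
        (u t x * (r x - integral \<Omega> (\<lambda>y. k y * \<bar>u t y\<bar> powr p))
          + divergence (\<lambda>y. A y *v grad (u t) y) x)) (at t)))"

definition positive_stationary_solution ::
  "(real^'n) set \<Rightarrow> (real^'n \<Rightarrow> real^'n^'n) \<Rightarrow> (real^'n \<Rightarrow> real) \<Rightarrow> (real^'n \<Rightarrow> real) \<Rightarrow> real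
     \<Rightarrow> (real^'n \<Rightarrow> real) \<Rightarrow> bool" where
  "positive_stationary_solution \<Omega> A r k p v \<longleftrightarrow>
     nonlocal_solution \<Omega> A r k p (\<lambda>t. v) \<and> (\<forall>x\<in>\<Omega>. v x > 0)"

end

theory Submission
  imports Defs
begin

lemma grad_scale:
  assumes "f differentiable (at x)"
  shows "grad (\<lambda>y. c * f y) x = c *\<^sub>R grad f x"
proof -
  have "((\<lambda>y. c * f y) has_derivative (\<lambda>h. c * frechet_derivative f (at x) h)) (at x)"
    using assms frechet_derivative_works has_derivative_mult_right by blast
  then have "frechet_derivative (\<lambda>y. c * f y) (at x) = (\<lambda>h. c * frechet_derivative f (at x) h)"
    using frechet_derivative_at by metis
  then show ?thesis unfolding grad_def by (simp add: vec_eq_iff)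
qed

lemma deriv_local:
  assumes "open S" "x \<in> S" "\<And>y. y \<in> S \<Longrightarrow> F y = G y"
  shows "frechet_derivative F (at x) = frechet_derivative G (at x)"
proof -
  have "\<And>D. (F has_derivative D) (at x) \<longleftrightarrow> (G has_derivative D) (at x)"
    using has_derivative_transform_within_open[OF _ assms(1,2)] assms(3) by metis
  then show ?thesis unfolding frechet_derivative_def by simp
qed

lemma diff_local:
  assumes "open S" "x \<in> S" "\<And>y. y \<in> S \<Longrightarrow> F y = G y" "G differentiable (at x)"
  shows "F differentiable (at x)"
  using assms has_derivative_transform_within_open unfolding differentiable_def
  by metis

lemma divergence_scale:
  assumes "(F :: real^'n \<Rightarrow> real^'n) differentiable (at x)"
  shows "divergence (\<lambda>y. c *\<^sub>R F y) x = c * divergence F x"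
proof -
  have "((\<lambda>y. c *\<^sub>R F y) has_derivative (\<lambda>h. c *\<^sub>R frechet_derivative F (at x) h)) (at x)"
    using assms frechet_derivative_works has_derivative_scaleR_right by blast
  then have "frechet_derivative (\<lambda>y. c *\<^sub>R F y) (at x) = (\<lambda>h. c *\<^sub>R frechet_derivative F (at x) h)"
    using frechet_derivative_at by metis
  then show ?thesis unfolding divergence_def by (simp add: sum_distrib_left)
qed

lemma cont_int:
  fixes h :: "'a::euclidean_space \<Rightarrow> real"
  assumes "continuous_on T h" "compact T" "S \<subseteq> T" "S \<in> lmeasurable"
  shows "h integrable_on S"
proof -
  have "bounded (h ` T)" using compact_continuous_image[OF assms(1,2)] compact_imp_bounded by blast
  then obtain M where M: "\<forall>y\<in>T. norm (h y) \<le> M" unfolding bounded_iff by auto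
  have cont: "continuous_on S h" using continuous_on_subset assms(1,3) by blast
  have S: "S \<in> sets lebesgue" using assms(4) fmeasurableD by blast
  have meas: "h \<in> borel_measurable (lebesgue_on S)"
    by (rule continuous_imp_measurable_on_sets_lebesgue[OF cont S])
  have "h absolutely_integrable_on S"
    by (rule measurable_bounded_by_integrable_imp_absolutely_integrable[OF meas S integrable_on_const[OF assms(4)]])
      (use M assms(3) in auto)
  then show ?thesis by (simp add: absolutely_integrable_on_def)
qed

theorem lemma3p1:
  fixes \<Omega> :: "(real^'n) set"
    and A :: "real^'n \<Rightarrow> real^'n^'n"
    and r k \<phi>\<^sub>1 :: "real^'n \<Rightarrow> real"
    and p lam\<^sub>1 :: real
  assumes "lipschitz_domain \<Omega>"
    and "smooth_matrix_on (closure \<Omega>) A"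
    and "uniformly_elliptic_on (closure \<Omega>) A"
    and "\<exists>C. C-lipschitz_on (closure \<Omega>) r" and "\<forall>x\<in>closure \<Omega>. r x > 0"
    and "\<exists>C. C-lipschitz_on (closure \<Omega>) k" and "\<forall>x\<in>closure \<Omega>. k x > 0"
    and "p \<ge> 1"
    and "first_neumann_eigenvalue \<Omega> A r lam\<^sub>1"
    and "neumann_eigenpair \<Omega> A r lam\<^sub>1 \<phi>\<^sub>1"
    and "\<forall>x\<in>\<Omega>. \<phi>\<^sub>1 x > 0"
    and "lam\<^sub>1 < 0"
  shows "\<exists>\<mu>>0. positive_stationary_solution \<Omega> A r k p (\<lambda>x. \<mu> * \<phi>\<^sub>1 x)"
proof -
  have opn: "open \<Omega>" and bdd: "bounded \<Omega>" and ne: "\<Omega> \<noteq> {}"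
    using assms(1) unfolding lipschitz_domain_def by auto
  have cpt: "compact (closure \<Omega>)" using bdd by (simp add: compact_closure)
  have ep: "neumann_bc \<Omega> \<phi>\<^sub>1" "\<forall>x\<in>\<Omega>. (\<lambda>y. A y *v grad \<phi>\<^sub>1 y) differentiable (at x)"
     "\<forall>x\<in>\<Omega>. divergence (\<lambda>y. A y *v grad \<phi>\<^sub>1 y) x + r x * \<phi>\<^sub>1 x = - lam\<^sub>1 * \<phi>\<^sub>1 x"
    using assms(10) unfolding neumann_eigenpair_def by auto
  have phic: "continuous_on (closure \<Omega>) \<phi>\<^sub>1" and phid: "\<forall>x\<in>\<Omega>. \<phi>\<^sub>1 differentiable (at x)"
    using ep(1) unfolding neumann_bc_def by auto
  obtain g where g: "continuous_on (closure \<Omega>) g" "\<forall>x\<in>\<Omega>. g x = grad \<phi>\<^sub>1 x"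
      "\<forall>x v. outward_normal \<Omega> x v \<longrightarrow> g x \<bullet> v = 0"
    using ep(1) unfolding neumann_bc_def by auto
  obtain Ck where "Ck-lipschitz_on (closure \<Omega>) k" using assms(6) by auto
  then have kc: "continuous_on (closure \<Omega>) k" using lipschitz_on_continuous_on by blast
  define h where "h y = k y * \<bar>\<phi>\<^sub>1 y\<bar> powr p" for y
  have hc: "continuous_on (closure \<Omega>) h"
    unfolding h_def using assms(8)
    by (intro continuous_intros continuous_on_powr' kc phic) auto
  have hnn: "\<forall>y\<in>closure \<Omega>. h y \<ge> 0" unfolding h_def using assms(7)
    by (simp add: less_imp_le)
  have lm: "\<Omega> \<in> lmeasurable" using lmeasurable_open[OF bdd opn] .
  have hint: "h integrable_on \<Omega>" using cont_int[OF hc cpt closure_subset lm] .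
  define K where "K = integral \<Omega> h"
  have Kpos: "K > 0"
  proof -
    obtain x0 where x0: "x0 \<in> \<Omega>" using ne by auto
    have hx0: "h x0 > 0" unfolding h_def using assms(7,11) x0 closure_subset by force
    have "continuous_on \<Omega> h" using continuous_on_subset[OF hc closure_subset] .
    then have "isCont h x0" using continuous_on_eq_continuous_at[OF opn] x0 by blast
    moreover have half: "h x0 / 2 > 0" using hx0 by simp
    ultimately obtain e where e: "e > 0" "\<forall>y. dist y x0 < e \<longrightarrow> dist (h y) (h x0) < h x0 / 2"
      unfolding continuous_at_eps_delta by blast
    obtain e2 where e2: "e2 > 0" "ball x0 e2 \<subseteq> \<Omega>" using opn x0 open_contains_ball by blast
    define d where "d = min e e2"
    have d: "d > 0" "ball x0 d \<subseteq> \<Omega>" using e e2 unfolding d_def by auto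
    have hb: "\<forall>y\<in>ball x0 d. h y \<ge> h x0 / 2"
    proof
      fix y assume "y \<in> ball x0 d"
      then have "dist y x0 < e" unfolding d_def by (simp add: dist_commute)
      then have "\<bar>h y - h x0\<bar> < h x0 / 2" using e(2) by (simp add: dist_real_def)
      then show "h y \<ge> h x0 / 2" by linarith
    qed
    have hib: "h integrable_on ball x0 d"
      using cont_int[OF hc cpt _ lmeasurable_ball] d(2) closure_subset by blast
    have "integral (ball x0 d) (\<lambda>y. h x0 / 2) \<le> integral (ball x0 d) h"
      by (rule integral_le[OF integrable_on_const[OF lmeasurable_ball] hib]) (use hb in auto)
    also have "\<dots> \<le> integral \<Omega> h"
      by (rule integral_subset_le[OF d(2) hib hint]) (use hnn closure_subset in auto)
    finally have le: "integral (ball x0 d) (\<lambda>y. h x0 / 2) \<le> K" unfolding K_def .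
    have "integral (ball x0 d) (\<lambda>y. h x0 / 2) = h x0 / 2 * Henstock_Kurzweil_Integration.content (ball x0 d)"
      using integral_mult_right[of "ball x0 d" "h x0 / 2" "\<lambda>_. 1"] lmeasure_integral[OF lmeasurable_ball, of x0 d]
      by simp
    moreover have "Henstock_Kurzweil_Integration.content (ball x0 d) > 0"
      using content_ball_pos[OF d(1), of x0] .
    ultimately have "integral (ball x0 d) (\<lambda>y. h x0 / 2) > 0" using half by simp
    then show ?thesis using le by linarith
  qed
  define \<mu> where "\<mu> = (- lam\<^sub>1 / K) powr (1 / p)"
  have mupos: "\<mu> > 0" unfolding \<mu>_def using Kpos assms(12) by simp
  have mup: "\<mu> powr p = - lam\<^sub>1 / K"
    unfolding \<mu>_def using Kpos assms(12,8) by (simp add: powr_powr)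
  define u where "u = (\<lambda>x. \<mu> * \<phi>\<^sub>1 x)"
  have gradu: "\<And>y. y \<in> \<Omega> \<Longrightarrow> grad u y = \<mu> *\<^sub>R grad \<phi>\<^sub>1 y"
    unfolding u_def using grad_scale phid by blast
  have Feq: "\<And>y. y \<in> \<Omega> \<Longrightarrow> A y *v grad u y = \<mu> *\<^sub>R (A y *v grad \<phi>\<^sub>1 y)"
    using gradu by (simp add: matrix_vector_mult_scaleR)
  have Fdiff: "\<forall>x\<in>\<Omega>. (\<lambda>y. A y *v grad u y) differentiable (at x)"
  proof
    fix x assume x: "x \<in> \<Omega>"
    have "(\<lambda>y. \<mu> *\<^sub>R (A y *v grad \<phi>\<^sub>1 y)) differentiable (at x)"
      using ep(2) x by (intro differentiable_scaleR differentiable_const) auto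
    then show "(\<lambda>y. A y *v grad u y) differentiable (at x)"
      using diff_local[OF opn x, of "\<lambda>y. A y *v grad u y" "\<lambda>y. \<mu> *\<^sub>R (A y *v grad \<phi>\<^sub>1 y)"] Feq by blast
  qed
  have divu: "\<And>x. x \<in> \<Omega> \<Longrightarrow> divergence (\<lambda>y. A y *v grad u y) x
      = \<mu> * divergence (\<lambda>y. A y *v grad \<phi>\<^sub>1 y) x"
  proof -
    fix x assume x: "x \<in> \<Omega>"
    have "divergence (\<lambda>y. A y *v grad u y) x = divergence (\<lambda>y. \<mu> *\<^sub>R (A y *v grad \<phi>\<^sub>1 y)) x"
      unfolding divergence_def using deriv_local[OF opn x, of "\<lambda>y. A y *v grad u y" "\<lambda>y. \<mu> *\<^sub>R (A y *v grad \<phi>\<^sub>1 y)"] Feq by simp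
    also have "\<dots> = \<mu> * divergence (\<lambda>y. A y *v grad \<phi>\<^sub>1 y) x"
      using divergence_scale ep(2) x by blast
    finally show "divergence (\<lambda>y. A y *v grad u y) x = \<mu> * divergence (\<lambda>y. A y *v grad \<phi>\<^sub>1 y) x" .
  qed
  have bcu: "neumann_bc \<Omega> u"
    unfolding neumann_bc_def
  proof (intro conjI ballI exI[of _ "\<lambda>x. \<mu> *\<^sub>R g x"])
    show "continuous_on (closure \<Omega>) u" unfolding u_def by (intro continuous_intros phic)
    show "u differentiable (at x)" if "x \<in> \<Omega>" for x
      unfolding u_def using phid that by (simp add: differentiable_mult differentiable_const)
    show "continuous_on (closure \<Omega>) (\<lambda>x. \<mu> *\<^sub>R g x)" by (intro continuous_intros g(1))
    show "\<mu> *\<^sub>R g x = grad u x" if "x \<in> \<Omega>" for x using gradu g(2) that by simp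
    show "\<forall>x v. outward_normal \<Omega> x v \<longrightarrow> \<mu> *\<^sub>R g x \<bullet> v = 0" using g(3) by simp
  qed
  have habs: "\<And>y. y \<in> \<Omega> \<Longrightarrow> k y * \<bar>u y\<bar> powr p = \<mu> powr p * h y"
    unfolding u_def h_def using mupos
    by (simp add: abs_mult powr_mult)
  have int_eq: "integral \<Omega> (\<lambda>y. k y * \<bar>u y\<bar> powr p) = - lam\<^sub>1"
  proof -
    have "integral \<Omega> (\<lambda>y. k y * \<bar>u y\<bar> powr p) = integral \<Omega> (\<lambda>y. \<mu> powr p * h y)"
      using habs by (intro integral_cong) auto
    also have "\<dots> = \<mu> powr p * K" unfolding K_def by simp
    finally show ?thesis using mup Kpos by simp
  qed
  have intu: "(\<lambda>y. k y * \<bar>u y\<bar> powr p) integrable_on \<Omega>"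
    by (rule integrable_eq[OF integrable_cmul[OF hint, of "\<mu> powr p"]]) (simp add: habs)
  have eqn: "u x * (r x - integral \<Omega> (\<lambda>y. k y * \<bar>u y\<bar> powr p))
          + divergence (\<lambda>y. A y *v grad u y) x = 0" if x: "x \<in> \<Omega>" for x
  proof -
    have "u x * (r x - integral \<Omega> (\<lambda>y. k y * \<bar>u y\<bar> powr p))
          + divergence (\<lambda>y. A y *v grad u y) x
        = \<mu> * (\<phi>\<^sub>1 x * r x + divergence (\<lambda>y. A y *v grad \<phi>\<^sub>1 y) x + lam\<^sub>1 * \<phi>\<^sub>1 x)"
      using int_eq divu[OF x] unfolding u_def by (simp add: algebra_simps)
    also have "\<dots> = 0" using ep(3) x by (simp add: algebra_simps)
    finally show ?thesis .
  qed
  have upos: "\<forall>x\<in>\<Omega>. u x > 0" using assms(11) mupos unfolding u_def by simp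
  have "positive_stationary_solution \<Omega> A r k p u"
    unfolding positive_stationary_solution_def nonlocal_solution_def
    using bcu Fdiff intu eqn upos
    by (auto simp: u_def[symmetric] intro: DERIV_const)
  then show ?thesis using mupos unfolding u_def by blast
qed

end
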